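(* For every integer $d\ge 3$, $\lambda(d,2^{d-3})\ge 1-\dfrac{3^d-2}{7^{d-1}}$.
   Context: A $d$-subcube of $\{0,1\}^n$ is a set $C\subseteq\{0,1\}^n$ obtained by fixing $n-d$ coordinates to constant values and letting the remaining $d$ coordinates vary arbitrarily; there are $\binom nd 2^{n-d}$ of them. For integers $0\le s\le 2^d$ and $S\subseteq\{0,1\}^n$, let $\Lambda(S,d,s)$ be the number of $d$-subcubes $C$ with $|S\cap C|=s$, let $\Lambda(n,d,s)=\max\{\Lambda(S,d,s): S\subseteq\{0,1\}^n\}$ for $n\ge d$, and let $\lambda(d,s)=\lim_{n\to\infty}\Lambda(n,d,s)/\big(\binom nd 2^{n-d}\big)$ (the limit exists since the ratio is non-increasing in $n$). *)

theory Defs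
  imports "HOL-Analysis.Analysis"
begin

definition hcube :: "nat \<Rightarrow> (nat \<Rightarrow> bool) set" where
  "hcube n = {x. \<forall>i. n \<le> i \<longrightarrow> \<not> x i}"

definition subcubes :: "nat \<Rightarrow> nat \<Rightarrow> (nat \<Rightarrow> bool) set set" where
  "subcubes n d = {C. \<exists>D a. D \<subseteq> {..<n} \<and> card D = d \<and> a \<in> hcube n \<and>
       C = {x \<in> hcube n. \<forall>i\<in>{..<n} - D. x i = a i}}"

definition Lambda_S :: "nat \<Rightarrow> (nat \<Rightarrow> bool) set \<Rightarrow> nat \<Rightarrow> nat \<Rightarrow> nat" where
  "Lambda_S n S d s = card {C \<in> subcubes n d. card (S \<inter> C) = s}"

definition Lambda :: "nat \<Rightarrow> nat \<Rightarrow> nat \<Rightarrow> nat" where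
  "Lambda n d s = Max {Lambda_S n S d s | S. S \<subseteq> hcube n}"

definition lambda_dens :: "nat \<Rightarrow> nat \<Rightarrow> real" where
  "lambda_dens d s = lim (\<lambda>n. real (Lambda n d s) / (real (n choose d) * 2 ^ (n - d)))"

end

theory Submission
  imports Defs "HOL-Library.Z2" "HOL-Library.Product_Plus"
begin
lemma UNIV_bit: "(UNIV::bit set) = {0,1}"
  by (auto intro: bit.exhaust)

instance bit :: finite
  by standard (simp add: UNIV_bit)

definition cube :: "nat \<Rightarrow> nat set \<Rightarrow> (nat \<Rightarrow> bool) \<Rightarrow> (nat \<Rightarrow> bool) set" where
  "cube n D a = {x \<in> hcube n. \<forall>i\<in>{..<n} - D. x i = a i}"

definition Par :: "nat \<Rightarrow> nat \<Rightarrow> (nat set \<times> (nat \<Rightarrow> bool)) set" where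
  "Par n d = {(D,a). D \<subseteq> {..<n} \<and> card D = d \<and> a \<in> hcube n \<and> (\<forall>i\<in>D. \<not> a i)}"

lemma hcube_eq: "hcube n = (\<lambda>A i. i \<in> A) ` Pow {..<n}"
proof (rule set_eqI, rule iffI)
  fix x assume "x \<in> hcube n"
  then have "x = (\<lambda>i. i \<in> {i. i < n \<and> x i})" by (auto simp: hcube_def fun_eq_iff not_le[symmetric])
  then show "x \<in> (\<lambda>A i. i \<in> A) ` Pow {..<n}" by blast
qed (auto simp: hcube_def)

lemma finite_hcube[simp]: "finite (hcube n)"
  by (simp add: hcube_eq)

lemma card_zeroed: assumes "D \<subseteq> {..<n}"
  shows "card {a \<in> hcube n. \<forall>i\<in>D. \<not> a i} = 2 ^ (n - card D)"
proof -
  have "{a \<in> hcube n. \<forall>i\<in>D. \<not> a i} = (\<lambda>A i. i \<in> A) ` Pow ({..<n} - D)"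
    by (auto simp: hcube_eq)
  moreover have "inj_on (\<lambda>A i. i \<in> A) (Pow ({..<n} - D))"
    by (auto simp: inj_on_def fun_eq_iff)
  ultimately have "card {a \<in> hcube n. \<forall>i\<in>D. \<not> a i} = card (Pow ({..<n} - D))"
    by (simp add: card_image)
  also have "\<dots> = 2 ^ (n - card D)"
    using assms by (simp add: card_Pow card_Diff_subset finite_subset)
  finally show ?thesis .
qed

lemma Par_Sigma: "Par n d = Sigma {D. D \<subseteq> {..<n} \<and> card D = d} (\<lambda>D. {a \<in> hcube n. \<forall>i\<in>D. \<not> a i})"
  by (auto simp: Par_def)

lemma finite_Par[simp]: "finite (Par n d)"
  unfolding Par_Sigma by (rule finite_SigmaI) auto

lemma card_Par: "card (Par n d) = (n choose d) * 2 ^ (n - d)"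
proof -
  have "card (Par n d) = (\<Sum>D\<in>{D. D \<subseteq> {..<n} \<and> card D = d}. card {a \<in> hcube n. \<forall>i\<in>D. \<not> a i})"
    unfolding Par_Sigma by (rule card_SigmaI) auto
  also have "\<dots> = (\<Sum>D\<in>{D. D \<subseteq> {..<n} \<and> card D = d}. 2 ^ (n - d))"
    by (rule sum.cong) (auto simp: card_zeroed)
  also have "\<dots> = (n choose d) * 2 ^ (n - d)"
    by (simp add: n_subsets)
  finally show ?thesis .
qed

lemma cube_mem: "x \<in> cube n D a \<longleftrightarrow> x \<in> hcube n \<and> (\<forall>i\<in>{..<n} - D. x i = a i)"
  by (simp add: cube_def)

lemma cube_inj: assumes "(D,a) \<in> Par n d" "(D',a') \<in> Par n d" "cube n D a = cube n D' a'"
  shows "D = D' \<and> a = a'"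
proof -
  have a: "a \<in> hcube n" "D \<subseteq> {..<n}" "\<forall>i\<in>D. \<not> a i" and a': "a' \<in> hcube n" "D' \<subseteq> {..<n}" "\<forall>i\<in>D'. \<not> a' i"
    using assms by (auto simp: Par_def)
  have "a \<in> cube n D a" "a' \<in> cube n D' a'" using a a' by (auto simp: cube_def)
  then have aa: "a \<in> cube n D' a'" "a' \<in> cube n D a" using assms(3) by simp_all
  have sub: "E \<subseteq> E'" if b: "b \<in> hcube n" "E \<subseteq> {..<n}" "\<forall>i\<in>E. \<not> b i" "b \<in> cube n E' b'"
     and eq: "cube n E b = cube n E' b'" for E E' b b'
  proof
    fix i assume i: "i \<in> E"
    have "b(i := True) \<in> cube n E b" using b i by (auto simp: cube_def hcube_def)
    then have "b(i := True) \<in> cube n E' b'" using eq by simp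
    then have 1: "\<forall>j\<in>{..<n} - E'. (b(i := True)) j = b' j" by (simp add: cube_def)
    show "i \<in> E'"
    proof (rule ccontr)
      assume "i \<notin> E'"
      then have "i \<in> {..<n} - E'" using b(2) i by auto
      then have "b' i = True" "b i = b' i" using 1 b(4) by (auto simp: cube_def)
      then show False using b(3) i by auto
    qed
  qed
  have "D = D'" using sub[OF a aa(1) assms(3)] sub[OF a' aa(2) assms(3)[symmetric]] by auto
  moreover have "a = a'"
  proof
    fix i show "a i = a' i"
    proof (cases "i < n")
      case True then show ?thesis using aa(1) a a' \<open>D = D'\<close> by (cases "i \<in> D") (auto simp: cube_def)
    next
      case False then show ?thesis using a(1) a'(1) by (auto simp: hcube_def)
    qed
  qed
  ultimately show ?thesis by simp
qed

lemma subcubes_eq: "subcubes n d = (\<lambda>(D,a). cube n D a) ` Par n d"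
proof (rule set_eqI, rule iffI)
  fix C assume "C \<in> subcubes n d"
  then obtain D a where h: "D \<subseteq> {..<n}" "card D = d" "a \<in> hcube n" "C = cube n D a"
    by (auto simp: subcubes_def cube_def)
  let ?a = "\<lambda>i. a i \<and> i \<notin> D"
  have "(D, ?a) \<in> Par n d" using h by (auto simp: Par_def hcube_def)
  moreover have "C = cube n D ?a" using h by (auto simp: cube_def)
  ultimately show "C \<in> (\<lambda>(D,a). cube n D a) ` Par n d" by force
qed (auto simp: subcubes_def cube_def Par_def)

lemma inj_cube: "inj_on (\<lambda>(D,a). cube n D a) (Par n d)"
  by (auto simp: inj_on_def dest: cube_inj)

lemma LamS_eq: "Lambda_S n S d s = card {p \<in> Par n d. card (S \<inter> cube n (fst p) (snd p)) = s}"
proof -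
  have "{C \<in> subcubes n d. card (S \<inter> C) = s} = (\<lambda>(D,a). cube n D a) ` {p \<in> Par n d. card (S \<inter> cube n (fst p) (snd p)) = s}"
    unfolding subcubes_eq by force
  moreover have "inj_on (\<lambda>(D,a). cube n D a) {p \<in> Par n d. card (S \<inter> cube n (fst p) (snd p)) = s}"
    using inj_cube by (rule inj_on_subset) auto
  ultimately show ?thesis unfolding Lambda_S_def by (simp add: card_image)
qed

lemma Lambda_fin: "finite {Lambda_S n S d s | S. S \<subseteq> hcube n}"
proof -
  have "{Lambda_S n S d s | S. S \<subseteq> hcube n} = (\<lambda>S. Lambda_S n S d s) ` Pow (hcube n)" by auto
  then show ?thesis by simp
qed

lemma Lambda_ge: "S \<subseteq> hcube n \<Longrightarrow> Lambda_S n S d s \<le> Lambda n d s"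
  unfolding Lambda_def by (rule Max_ge[OF Lambda_fin]) auto

lemma Lambda_attained: "\<exists>S. S \<subseteq> hcube n \<and> Lambda n d s = Lambda_S n S d s"
proof -
  have "Lambda n d s \<in> {Lambda_S n S d s | S. S \<subseteq> hcube n}"
    unfolding Lambda_def by (rule Max_in[OF Lambda_fin]) auto
  then show ?thesis by auto
qed

lemma Lambda_le_Par: "Lambda n d s \<le> card (Par n d)"
proof -
  obtain S where "Lambda n d s = Lambda_S n S d s" using Lambda_attained by blast
  then show ?thesis by (simp add: LamS_eq card_mono)
qed

type_synonym V = "bit \<times> bit \<times> bit"

definition dotv :: "V \<Rightarrow> V \<Rightarrow> bit" where
  "dotv c x = fst c * fst x + fst (snd c) * fst (snd x) + snd (snd c) * snd (snd x)"

lemma all_bit: "(\<forall>b::bit. P b) = (P 0 \<and> P 1)"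
  by (metis bit.exhaust)
lemma ex_bit: "(\<exists>b::bit. P b) = (P 0 \<or> P 1)"
  by (metis bit.exhaust)

lemma dotv_add: "dotv c (x + y) = dotv c x + dotv c y"
  by (simp add: dotv_def distrib_left del: add_bit_eq_xor mult_bit_eq_and)

lemma dotv_zero[simp]: "dotv c 0 = 0"
  by (simp add: dotv_def)

lemma dotv_sum: "finite A \<Longrightarrow> dotv c (sum f A) = (\<Sum>i\<in>A. dotv c (f i))"
  by (induction A rule: finite_induct) (auto simp: dotv_add)

lemma dotv_comm: "dotv c x = dotv x c"
  by (simp add: dotv_def mult.commute del: add_bit_eq_xor mult_bit_eq_and)

lemma V_add_self_all: "\<forall>x::V. x + x = 0"
  by (simp add: all_bit split_paired_All zero_prod_def)
lemma V_add_self[simp]: "(x::V) + x = 0"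
  using V_add_self_all by blast

lemma V_minus: "(x::V) - y = x + y"
proof -
  have "x - y = x - y + (y + y)" by simp
  also have "\<dots> = x + y" by (simp add: algebra_simps)
  finally show ?thesis .
qed

lemma V_eq_iff_add: "(x::V) = y \<longleftrightarrow> x + y = 0"
proof
  assume "x + y = 0"
  then have "x + (y + y) = 0 + y" by (simp only: add.assoc[symmetric])
  then show "x = y" by simp
qed simp

lemma L2_all: "\<forall>x y::V. \<exists>c. c \<noteq> 0 \<and> dotv c x = 0 \<and> dotv c y = 0"
  by (simp add: dotv_def all_bit ex_bit split_paired_Ex split_paired_All zero_prod_def del: V_add_self dotv_zero)
lemma L2: "\<exists>c. c \<noteq> 0 \<and> dotv c x = 0 \<and> dotv c (y::V) = 0"
  using L2_all by blast

lemma UNIV_V: "(UNIV::V set) = {0,1} \<times> {0,1} \<times> {0,1}"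
  by (simp only: UNIV_bit flip: UNIV_Times_UNIV)

lemma card_UNIV_V: "card (UNIV::V set) = 8"
  unfolding UNIV_V by (simp add: card_cartesian_product)

lemma indep3:
  fixes x1 x2 x3 c1 c2 :: V
  assumes "x1 \<noteq> 0" "dotv c1 x1 = 0" "dotv c1 x2 \<noteq> 0" "dotv c2 x1 = 0" "dotv c2 x2 = 0" "dotv c2 x3 \<noteq> 0"
    and g: "(if b1 then x1 else 0) + (if b2 then x2 else 0) + (if b3 then x3 else 0) = 0"
  shows "\<not> b1 \<and> \<not> b2 \<and> \<not> b3"
proof -
  let ?g = "(if b1 then x1 else 0) + (if b2 then x2 else 0) + (if b3 then x3 else 0)"
  have "dotv c2 ?g = 0" "dotv c1 ?g = 0" using g by simp_all
  then show ?thesis using assms(1-6) g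
    by (cases b1; cases b2; cases b3) (simp_all add: dotv_add)
qed

lemma sum_three:
  assumes "W \<subseteq> {i1,i2,i3}" "i1 \<noteq> i2" "i1 \<noteq> i3" "i2 \<noteq> i3"
  shows "sum (v :: nat \<Rightarrow> V) W = (if i1 \<in> W then v i1 else 0) + (if i2 \<in> W then v i2 else 0) + (if i3 \<in> W then v i3 else 0)"
proof -
  have "sum v W = sum v ({i1,i2,i3} \<inter> W)" using assms(1) by (simp add: Int_absorb1)
  also have "\<dots> = (\<Sum>i\<in>{i1,i2,i3}. if i \<in> W then v i else 0)"
    by (rule sum.inter_restrict) simp
  also have "\<dots> = (if i1 \<in> W then v i1 else 0) + (if i2 \<in> W then v i2 else 0) + (if i3 \<in> W then v i3 else 0)"
    using assms(2-4) by (simp add: algebra_simps)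
  finally show ?thesis .
qed

definition Bp :: "(nat \<Rightarrow> V) \<Rightarrow> nat set \<Rightarrow> bool" where
  "Bp v T \<longleftrightarrow> (\<forall>t. \<exists>!W. W \<subseteq> T \<and> sum v W = t)"

lemma sum_split_V: "finite A \<Longrightarrow> sum (v :: nat \<Rightarrow> V) A = sum v (A \<inter> B) + sum v (A - B)"
  by (simp add: sum.Int_Diff)

lemma Bp_from_indep:
  fixes v :: "nat \<Rightarrow> V"
  assumes d: "i1 \<noteq> i2" "i1 \<noteq> i3" "i2 \<noteq> i3"
    and h: "v i1 \<noteq> 0" "dotv c1 (v i1) = 0" "dotv c1 (v i2) \<noteq> 0" "dotv c2 (v i1) = 0" "dotv c2 (v i2) = 0" "dotv c2 (v i3) \<noteq> 0"
  shows "Bp v {i1,i2,i3}"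
proof -
  let ?T = "{i1,i2,i3}"
  have nz: "W = {}" if "W \<subseteq> ?T" "sum v W = 0" for W
  proof -
    have "\<not> (i1 \<in> W) \<and> \<not> (i2 \<in> W) \<and> \<not> (i3 \<in> W)"
      by (rule indep3[OF h]) (use that sum_three[OF that(1) d] in simp)
    then show ?thesis using that(1) by auto
  qed
  have inj: "inj_on (sum v) (Pow ?T)"
  proof (rule inj_onI)
    fix W W' assume W: "W \<in> Pow ?T" "W' \<in> Pow ?T" "sum v W = sum v W'"
    have fW: "finite W" "finite W'" using W finite_subset by auto
    have "sum v W = sum v (W \<inter> W') + sum v (W - W')" using sum_split_V[OF fW(1)] .
    moreover have "sum v W' = sum v (W \<inter> W') + sum v (W' - W)" using sum_split_V[OF fW(2), where B=W]
      by (simp add: Int_commute)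
    ultimately have "sum v (W - W') = sum v (W' - W)" using W(3) by simp
    then have "sum v (W - W') + sum v (W' - W) = 0" using V_eq_iff_add by blast
    moreover have "sum v ((W - W') \<union> (W' - W)) = sum v (W - W') + sum v (W' - W)"
      by (rule sum.union_disjoint) (use fW in auto)
    ultimately have "(W - W') \<union> (W' - W) = {}" using nz[where W="(W - W') \<union> (W' - W)"] W by auto
    then show "W = W'" by auto
  qed
  have "card (sum v ` Pow ?T) = card (Pow ?T)" using inj by (rule card_image)
  also have "\<dots> = 8" using d by (simp add: card_Pow)
  finally have c8: "card (sum v ` Pow ?T) = 8" .
  have surj: "sum v ` Pow ?T = UNIV"
  proof (rule card_subset_eq)
    show "card (sum v ` Pow ?T) = card (UNIV :: V set)" using c8 card_UNIV_V by simp
  qed simp_all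
  show ?thesis unfolding Bp_def
  proof
    fix t :: V
    obtain W where W: "W \<in> Pow ?T" "sum v W = t" using surj by (metis UNIV_I imageE)
    show "\<exists>!W. W \<subseteq> ?T \<and> sum v W = t"
    proof (rule ex1I[of _ W])
      show "W \<subseteq> ?T \<and> sum v W = t" using W by simp
    next
      fix W' assume "W' \<subseteq> ?T \<and> sum v W' = t"
      then show "W' = W" using W inj_onD[OF inj, of W' W] by simp
    qed
  qed
qed

lemma fiber_card:
  fixes v :: "nat \<Rightarrow> V"
  assumes fin: "finite D" and TD: "T \<subseteq> D" and cT: "card T = 3" and B: "Bp v T"
  shows "card {Y. Y \<subseteq> D \<and> sum v Y = t} = 2 ^ (card D - 3)"
proof -
  have finT: "finite T" using fin TD finite_subset by blast
  have bij: "bij_betw (\<lambda>Y. Y - T) {Y. Y \<subseteq> D \<and> sum v Y = t} (Pow (D - T))"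
  proof (rule bij_betwI')
    fix Y Y' assume Y: "Y \<in> {Y. Y \<subseteq> D \<and> sum v Y = t}" and Y': "Y' \<in> {Y. Y \<subseteq> D \<and> sum v Y = t}"
    have fY: "finite Y" "finite Y'" using Y Y' fin finite_subset by auto
    show "(Y - T = Y' - T) = (Y = Y')"
    proof
      assume eq: "Y - T = Y' - T"
      have "sum v Y = sum v (Y \<inter> T) + sum v (Y - T)" by (rule sum_split_V[OF fY(1)])
      moreover have "sum v Y' = sum v (Y' \<inter> T) + sum v (Y' - T)" by (rule sum_split_V[OF fY(2)])
      ultimately have "sum v (Y \<inter> T) + sum v (Y - T) = sum v (Y' \<inter> T) + sum v (Y - T)" using Y Y' eq by simp
      then have "sum v (Y \<inter> T) = sum v (Y' \<inter> T)" by simp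
      moreover obtain W where "\<And>W'. W' \<subseteq> T \<and> sum v W' = sum v (Y \<inter> T) \<Longrightarrow> W' = W"
        using B unfolding Bp_def by metis
      ultimately have "Y \<inter> T = Y' \<inter> T" by (metis Int_lower2)
      then show "Y = Y'" using eq by blast
    qed simp
  next
    fix Y assume "Y \<in> {Y. Y \<subseteq> D \<and> sum v Y = t}"
    then show "Y - T \<in> Pow (D - T)" by auto
  next
    fix Z assume Z: "Z \<in> Pow (D - T)"
    obtain W where W: "W \<subseteq> T" "sum v W = t - sum v Z" using B unfolding Bp_def by metis
    have fZ: "finite Z" "finite W" using Z W fin finT by (auto intro: finite_subset)
    have "sum v (Z \<union> W) = sum v Z + sum v W"
      by (rule sum.union_disjoint) (use fZ W Z in auto)
    then have "sum v (Z \<union> W) = t" using W by simp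
    moreover have "Z \<union> W - T = Z" using Z W by auto
    moreover have "Z \<union> W \<subseteq> D" using Z W TD by auto
    ultimately show "\<exists>Y\<in>{Y. Y \<subseteq> D \<and> sum v Y = t}. Z = Y - T" by blast
  qed
  have "card {Y. Y \<subseteq> D \<and> sum v Y = t} = card (Pow (D - T))" using bij by (rule bij_betw_same_card)
  also have "\<dots> = 2 ^ (card D - 3)" using fin TD cT finT by (simp add: card_Pow card_Diff_subset finite_subset)
  finally show ?thesis .
qed

definition good :: "(nat \<Rightarrow> V) \<Rightarrow> nat set \<Rightarrow> bool" where
  "good v D \<longleftrightarrow> (\<forall>c. c \<noteq> 0 \<longrightarrow> (\<exists>i\<in>D. dotv c (v i) \<noteq> 0))"

lemma goodD: "good v D \<Longrightarrow> c \<noteq> 0 \<Longrightarrow> \<exists>i\<in>D. dotv c (v i) \<noteq> 0"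
  unfolding good_def by blast

lemma good_Bp:
  assumes "good v D"
  shows "\<exists>T \<subseteq> D. card T = 3 \<and> Bp v T"
proof -
  have c0: "(1,1,1) \<noteq> (0::V)" by (simp add: zero_prod_def)
  obtain i1 where i1: "i1 \<in> D" "dotv (1,1,1) (v i1) \<noteq> 0" using goodD[OF assms c0] by blast
  have x1: "v i1 \<noteq> 0" using i1(2) by (metis dotv_zero)
  obtain c1 where c1: "c1 \<noteq> 0" "dotv c1 (v i1) = 0" using L2[of "v i1" "v i1"] by blast
  obtain i2 where i2: "i2 \<in> D" "dotv c1 (v i2) \<noteq> 0" using goodD[OF assms c1(1)] by blast
  obtain c2 where c2: "c2 \<noteq> 0" "dotv c2 (v i1) = 0" "dotv c2 (v i2) = 0" using L2[of "v i1" "v i2"] by blast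
  obtain i3 where i3: "i3 \<in> D" "dotv c2 (v i3) \<noteq> 0" using goodD[OF assms c2(1)] by blast
  have d1: "i1 \<noteq> i2" using c1(2) i2(2) by metis
  have d2: "i1 \<noteq> i3" using c2(2) i3(2) by metis
  have d3: "i2 \<noteq> i3" using c2(3) i3(2) by metis
  note d = d1 d2 d3
  have "Bp v {i1,i2,i3}" by (rule Bp_from_indep[OF d x1 c1(2) i2(2) c2(2,3) i3(2)])
  moreover have "card {i1,i2,i3} = 3" using d by simp
  moreover have "{i1,i2,i3} \<subseteq> D" using i1 i2 i3 by simp
  ultimately show ?thesis by blast
qed

definition Sv :: "nat \<Rightarrow> (nat \<Rightarrow> V) \<Rightarrow> (nat \<Rightarrow> bool) set" where
  "Sv n v = {x \<in> hcube n. sum v {i. i < n \<and> x i} = 0}"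

lemma Sv_sub: "Sv n v \<subseteq> hcube n" by (auto simp: Sv_def)

lemma cube_fiber:
  assumes p: "(D,a) \<in> Par n d" and g: "good v D"
  shows "card (Sv n v \<inter> cube n D a) = 2 ^ (d - 3)"
proof -
  have D: "D \<subseteq> {..<n}" "card D = d" "a \<in> hcube n" "\<forall>i\<in>D. \<not> a i" using p by (auto simp: Par_def)
  have finD: "finite D" using D(1) finite_subset by blast
  define A0 where "A0 = {i. i < n \<and> a i}"
  have finA0: "finite A0" by (simp add: A0_def)
  have split: "{i. i < n \<and> x i} = A0 \<union> {i\<in>D. x i}" if "x \<in> cube n D a" for x
    using that D unfolding A0_def cube_def by auto
  have disj: "A0 \<inter> {i\<in>D. x i} = {}" for x using D unfolding A0_def by auto
  have sumx: "sum v {i. i < n \<and> x i} = sum v A0 + sum v {i\<in>D. x i}" if "x \<in> cube n D a" for x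
    unfolding split[OF that] by (rule sum.union_disjoint) (use finA0 finD disj in auto)
  have bij: "bij_betw (\<lambda>x. {i\<in>D. x i}) (Sv n v \<inter> cube n D a) {Y. Y \<subseteq> D \<and> sum v Y = sum v A0}"
  proof (rule bij_betwI')
    fix x y assume x: "x \<in> Sv n v \<inter> cube n D a" and y: "y \<in> Sv n v \<inter> cube n D a"
    show "({i\<in>D. x i} = {i\<in>D. y i}) = (x = y)"
    proof
      assume eq: "{i\<in>D. x i} = {i\<in>D. y i}"
      show "x = y"
      proof
        fix i
        show "x i = y i"
        proof (cases "i < n")
          case True
          then show ?thesis
          proof (cases "i \<in> D")
            case True then show ?thesis using eq by blast
          next
            case False then show ?thesis using x y \<open>i < n\<close> by (auto simp: cube_def)
          qed
        next
          case False then show ?thesis using x y by (auto simp: cube_def hcube_def)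
        qed
      qed
    qed simp
  next
    fix x assume x: "x \<in> Sv n v \<inter> cube n D a"
    then have "sum v A0 + sum v {i\<in>D. x i} = 0" using sumx by (auto simp: Sv_def)
    then have "sum v {i\<in>D. x i} + sum v A0 = 0" by (simp add: add.commute)
    then have "sum v {i\<in>D. x i} = sum v A0" using V_eq_iff_add[of "sum v {i\<in>D. x i}" "sum v A0"] by blast
    then show "{i\<in>D. x i} \<in> {Y. Y \<subseteq> D \<and> sum v Y = sum v A0}" by auto
  next
    fix Y assume Y: "Y \<in> {Y. Y \<subseteq> D \<and> sum v Y = sum v A0}"
    define x where "x = (\<lambda>i. a i \<or> i \<in> Y)"
    have xc: "x \<in> cube n D a" using D Y unfolding x_def cube_def hcube_def by auto
    have xY: "{i\<in>D. x i} = Y" using D Y unfolding x_def by auto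
    have "sum v {i. i < n \<and> x i} = sum v A0 + sum v A0" using sumx[OF xc] xY Y by simp
    then have "x \<in> Sv n v" using xc by (simp add: Sv_def cube_def)
    then show "\<exists>x\<in>Sv n v \<inter> cube n D a. Y = {i\<in>D. x i}" using xc xY by blast
  qed
  obtain T where T: "T \<subseteq> D" "card T = 3" "Bp v T" using good_Bp[OF g] by blast
  have "card (Sv n v \<inter> cube n D a) = card {Y. Y \<subseteq> D \<and> sum v Y = sum v A0}"
    using bij by (rule bij_betw_same_card)
  also have "\<dots> = 2 ^ (card D - 3)" by (rule fiber_card[OF finD T])
  finally show ?thesis using D(2) by simp
qed

definition Vs :: "V set" where "Vs = UNIV - {0}"

lemma card_Vs: "card Vs = 7"
proof -
  have "card Vs = card (UNIV::V set) - 1" unfolding Vs_def by (rule card_Diff_singleton) simp_all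
  then show ?thesis using card_UNIV_V by simp
qed

lemma finite_Vs[simp]: "finite Vs" by (simp add: Vs_def)

lemma card_filter_sum: "finite A \<Longrightarrow> card {x\<in>A. P x} = (\<Sum>x\<in>A. if P x then 1 else 0)"
proof -
  assume "finite A"
  then have "(\<Sum>x\<in>A. if P x then 1 else 0) = (\<Sum>x\<in>{x\<in>A. P x}. (1::nat))"
    by (rule sum.inter_filter[symmetric])
  then show ?thesis by simp
qed

lemma sum_V: "(\<Sum>x\<in>(UNIV::V set). f x) = (\<Sum>a\<in>{0,1}. \<Sum>b\<in>{0,1}. \<Sum>e\<in>{0,1}. f (a,b,e))"
proof -
  have 1: "(\<Sum>a\<in>UNIV. \<Sum>bc\<in>UNIV. f (a,bc)) = (\<Sum>x\<in>(UNIV::V set). f x)"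
    using sum.cartesian_product[of "\<lambda>a bc. f (a,bc)" "UNIV::(bit\<times>bit) set" "UNIV::bit set"] by simp
  have 2: "(\<Sum>b\<in>UNIV. \<Sum>e\<in>UNIV. f (a,b,e)) = (\<Sum>bc\<in>(UNIV::(bit\<times>bit) set). f (a,bc))" for a
    using sum.cartesian_product[of "\<lambda>b e. f (a,b,e)" "UNIV::bit set" "UNIV::bit set"] by simp
  show ?thesis unfolding 1[symmetric] 2[symmetric] UNIV_bit ..
qed

lemma card_V: "card {x::V. P x} = (\<Sum>a\<in>{0,1}. \<Sum>b\<in>{0,1}. \<Sum>e\<in>{0,1}. if P (a,b,e) then 1 else 0)"
proof -
  have "card {x::V. P x} = card {x\<in>UNIV. P x}" by simp
  also have "\<dots> = (\<Sum>x\<in>UNIV. if P x then 1 else 0)" by (rule card_filter_sum) simp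
  also have "\<dots> = (\<Sum>a\<in>{0,1}. \<Sum>b\<in>{0,1}. \<Sum>e\<in>{0,1}. if P (a,b,e) then 1 else 0)" by (rule sum_V)
  finally show ?thesis .
qed

lemma K_card_all: "\<forall>a b e. (a,b,e) \<noteq> (0::V) \<longrightarrow> (\<Sum>x\<in>{0,1}. \<Sum>y\<in>{0,1}. \<Sum>z\<in>{0,1}. if (x,y,z) \<noteq> (0::V) \<and> dotv (a,b,e) (x,y,z) = 0 then 1 else (0::nat)) = 3"
  by (simp add: all_bit dotv_def zero_prod_def del: V_add_self dotv_zero)

lemma K_card: "c \<noteq> 0 \<Longrightarrow> card {x\<in>Vs. dotv c x = 0} = 3"
proof -
  assume c: "c \<noteq> 0"
  obtain a b e where abe: "c = (a,b,e)" by (cases c) auto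
  have "card {x\<in>Vs. dotv c x = 0} = card {x. x \<noteq> 0 \<and> dotv c x = 0}" by (simp add: Vs_def)
  also have "\<dots> = (\<Sum>x\<in>{0,1}. \<Sum>y\<in>{0,1}. \<Sum>z\<in>{0,1}. if (x,y,z) \<noteq> (0::V) \<and> dotv (a,b,e) (x,y,z) = 0 then 1 else (0::nat))"
    unfolding card_V abe ..
  also have "\<dots> = 3" using K_card_all c abe by blast
  finally show ?thesis .
qed

lemma sum_card_swap:
  assumes "finite A" "finite B"
  shows "(\<Sum>a\<in>A. card {b\<in>B. R a b}) = (\<Sum>b\<in>B. card {a\<in>A. R a b})"
proof -
  have "(\<Sum>a\<in>A. card {b\<in>B. R a b}) = (\<Sum>a\<in>A. \<Sum>b\<in>B. if R a b then 1 else 0)"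
    using assms by (simp add: card_filter_sum)
  also have "\<dots> = (\<Sum>b\<in>B. \<Sum>a\<in>A. if R a b then 1 else 0)" by (rule sum.swap)
  also have "\<dots> = (\<Sum>b\<in>B. card {a\<in>A. R a b})"
    using assms by (simp add: card_filter_sum)
  finally show ?thesis .
qed

lemma card_PiE_if:
  assumes "D \<subseteq> {..<n}"
  shows "card (PiE {..<n} (\<lambda>i. if i \<in> D then A else B)) = card A ^ card D * card B ^ (n - card D)"
proof -
  have "card (PiE {..<n} (\<lambda>i. if i \<in> D then A else B)) = (\<Prod>i\<in>{..<n}. if i \<in> D then card A else card B)"
    by (simp add: card_PiE if_distrib)
  also have "\<dots> = (\<Prod>i\<in>{..<n} \<inter> {i. i \<in> D}. card A) * (\<Prod>i\<in>{..<n} \<inter> - {i. i \<in> D}. card B)"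
    by (rule prod.If_cases) simp
  also have "{..<n} \<inter> {i. i \<in> D} = D" using assms by auto
  also have "{..<n} \<inter> - {i. i \<in> D} = {..<n} - D" by auto
  finally have "card (PiE {..<n} (\<lambda>i. if i \<in> D then A else B)) = card A ^ card D * card B ^ card ({..<n} - D)"
    by simp
  moreover have "card ({..<n} - D) = n - card D" using assms by (simp add: card_Diff_subset finite_subset)
  ultimately show ?thesis by simp
qed

definition FF :: "nat \<Rightarrow> (nat \<Rightarrow> V) set" where "FF n = PiE {..<n} (\<lambda>_. Vs)"

lemma finite_FF[simp]: "finite (FF n)" by (simp add: FF_def finite_PiE)

lemma card_FF: "card (FF n) = 7 ^ n" by (simp add: FF_def card_PiE card_Vs)

lemma count_good:
  assumes D: "D \<subseteq> {..<n}" "card D = d" "d \<ge> 1"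
  shows "card {v\<in>FF n. good v D} + 7 * 3 ^ d * 7 ^ (n - d) \<ge> 7 ^ n + 14 * 7 ^ (n - d)"
proof -
  have finD: "finite D" using D finite_subset by blast
  have Dne: "D \<noteq> {}" using D by auto
  define k where "k v = card {c\<in>Vs. \<forall>i\<in>D. dotv c (v i) = 0}" for v
  define Cn where "Cn = {v\<in>FF n. \<exists>u\<in>Vs. \<forall>i\<in>D. v i = u}"
  define NG where "NG = {v\<in>FF n. \<not> good v D}"
  have sumk: "(\<Sum>v\<in>FF n. k v) = 7 * 3 ^ d * 7 ^ (n - d)"
  proof -
    have "(\<Sum>v\<in>FF n. k v) = (\<Sum>c\<in>Vs. card {v\<in>FF n. \<forall>i\<in>D. dotv c (v i) = 0})"
      unfolding k_def by (rule sum_card_swap) auto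
    also have "\<dots> = (\<Sum>c\<in>Vs. 3 ^ d * 7 ^ (n - d))"
    proof (rule sum.cong[OF refl])
      fix c assume c: "c \<in> Vs"
      have "{v\<in>FF n. \<forall>i\<in>D. dotv c (v i) = 0} = PiE {..<n} (\<lambda>i. if i \<in> D then {x\<in>Vs. dotv c x = 0} else Vs)"
        using D(1) unfolding FF_def by (auto simp: PiE_def Pi_def split: if_splits)
      moreover have "c \<noteq> 0" using c by (simp add: Vs_def)
      ultimately show "card {v\<in>FF n. \<forall>i\<in>D. dotv c (v i) = 0} = 3 ^ d * 7 ^ (n - d)"
        using D by (simp add: card_PiE_if K_card card_Vs)
    qed
    also have "\<dots> = 7 * 3 ^ d * 7 ^ (n - d)" by (simp add: card_Vs)
    finally show ?thesis .
  qed
  have cardCn: "card Cn = 7 * 7 ^ (n - d)"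
  proof -
    have "Cn = (\<Union>u\<in>Vs. PiE {..<n} (\<lambda>i. if i \<in> D then {u} else Vs))"
      using D(1) unfolding Cn_def FF_def by (auto simp: PiE_def Pi_def split: if_splits)
    moreover have "card (\<Union>u\<in>Vs. PiE {..<n} (\<lambda>i. if i \<in> D then {u} else Vs)) = (\<Sum>u\<in>Vs. card (PiE {..<n} (\<lambda>i. if i \<in> D then {u} else Vs)))"
    proof (rule card_UN_disjoint)
      show "\<forall>u\<in>Vs. \<forall>u'\<in>Vs. u \<noteq> u' \<longrightarrow> PiE {..<n} (\<lambda>i. if i \<in> D then {u} else Vs) \<inter> PiE {..<n} (\<lambda>i. if i \<in> D then {u'} else Vs) = {}"
      proof (intro ballI impI)
        fix u u' :: V assume "u \<noteq> u'"
        obtain i where "i \<in> D" using Dne by blast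
        then show "PiE {..<n} (\<lambda>i. if i \<in> D then {u} else Vs) \<inter> PiE {..<n} (\<lambda>i. if i \<in> D then {u'} else Vs) = {}"
          using \<open>u \<noteq> u'\<close> D(1) by (auto simp: PiE_def Pi_def)
      qed
    qed (auto simp: finite_PiE)
    moreover have "\<And>u::V. card (PiE {..<n} (\<lambda>i. if i \<in> D then {u} else Vs)) = 7 ^ (n - d)"
      using D by (simp add: card_PiE_if card_Vs)
    ultimately show ?thesis by (simp add: card_Vs)
  qed
  have pt: "(if v \<in> NG then 1 else 0) + 2 * (if v \<in> Cn then 1 else 0) \<le> k v" if v: "v \<in> FF n" for v
  proof (cases "v \<in> Cn")
    case True
    then obtain u where u: "u \<in> Vs" "\<forall>i\<in>D. v i = u" unfolding Cn_def by blast
    have "{c\<in>Vs. \<forall>i\<in>D. dotv c (v i) = 0} = {c\<in>Vs. dotv u c = 0}"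
      using u Dne by (auto simp: dotv_comm)
    then have "k v = card {c\<in>Vs. dotv u c = 0}" unfolding k_def by simp
    moreover have "u \<noteq> 0" using u(1) by (simp add: Vs_def)
    ultimately have "k v = 3" using K_card by simp
    then show ?thesis using True by simp
  next
    case False
    show ?thesis
    proof (cases "v \<in> NG")
      case True
      then obtain c where "c \<noteq> 0" "\<forall>i\<in>D. dotv c (v i) = 0" unfolding NG_def good_def by blast
      then have "c \<in> {c\<in>Vs. \<forall>i\<in>D. dotv c (v i) = 0}" by (simp add: Vs_def)
      moreover have "finite {c\<in>Vs. \<forall>i\<in>D. dotv c (v i) = 0}" by simp
      ultimately have "card {c\<in>Vs. \<forall>i\<in>D. dotv c (v i) = 0} > 0" using card_gt_0_iff by blast
      then have "k v \<ge> 1" unfolding k_def by simp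
      then show ?thesis using False True by simp
    qed (use False in simp)
  qed
  have "card NG + 2 * card Cn = (\<Sum>v\<in>FF n. (if v \<in> NG then 1 else 0) + 2 * (if v \<in> Cn then 1 else 0))"
  proof -
    have "card NG = (\<Sum>v\<in>FF n. if v \<in> NG then 1 else 0)" unfolding NG_def
      by (simp add: card_filter_sum)
    moreover have "card Cn = (\<Sum>v\<in>FF n. if v \<in> Cn then 1 else 0)" unfolding Cn_def
      by (simp add: card_filter_sum)
    ultimately show ?thesis by (simp add: sum.distrib sum_distrib_left)
  qed
  also have "\<dots> \<le> (\<Sum>v\<in>FF n. k v)" by (rule sum_mono) (rule pt)
  finally have NGb: "card NG + 14 * 7 ^ (n - d) \<le> 7 * 3 ^ d * 7 ^ (n - d)" using sumk cardCn by simp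
  have "card {v\<in>FF n. good v D} + card NG = (\<Sum>v\<in>FF n. (if good v D then 1 else 0) + (if \<not> good v D then 1 else 0))"
    by (simp add: NG_def card_filter_sum sum.distrib)
  also have "\<dots> = (\<Sum>v\<in>FF n. 1)" by (rule sum.cong) auto
  also have "\<dots> = card (FF n)" by simp
  finally have "card {v\<in>FF n. good v D} + card NG = card (FF n)" .
  then show ?thesis using NGb card_FF by simp
qed

lemma g_le_Lambda:
  assumes "d \<ge> 3"
  shows "card {p \<in> Par n d. good v (fst p)} \<le> Lambda n d (2 ^ (d - 3))"
proof -
  have "{p \<in> Par n d. good v (fst p)} \<subseteq> {p \<in> Par n d. card (Sv n v \<inter> cube n (fst p) (snd p)) = 2 ^ (d - 3)}"
  proof
    fix p assume p: "p \<in> {p \<in> Par n d. good v (fst p)}"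
    obtain D a where pa: "p = (D,a)" by (cases p) auto
    have "card (Sv n v \<inter> cube n D a) = 2 ^ (d - 3)" using cube_fiber[of D a n d v] p pa by simp
    then show "p \<in> {p \<in> Par n d. card (Sv n v \<inter> cube n (fst p) (snd p)) = 2 ^ (d - 3)}" using p pa by simp
  qed
  then have "card {p \<in> Par n d. good v (fst p)} \<le> Lambda_S n (Sv n v) d (2 ^ (d - 3))"
    unfolding LamS_eq by (rule card_mono[rotated]) simp
  also have "\<dots> \<le> Lambda n d (2 ^ (d - 3))" by (rule Lambda_ge[OF Sv_sub])
  finally show ?thesis .
qed

lemma lower_nat:
  assumes d: "d \<ge> 3" and n: "n \<ge> d"
  shows "7 ^ n * Lambda n d (2 ^ (d - 3)) + card (Par n d) * (7 * 3 ^ d * 7 ^ (n - d))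
         \<ge> card (Par n d) * (7 ^ n + 14 * 7 ^ (n - d))"
proof -
  define g where "g v = card {p \<in> Par n d. good v (fst p)}" for v
  define L where "L = Lambda n d (2 ^ (d - 3))"
  have gL: "g v \<le> L" for v unfolding g_def L_def by (rule g_le_Lambda[OF d])
  have "(\<Sum>v\<in>FF n. g v) = (\<Sum>p\<in>Par n d. card {v\<in>FF n. good v (fst p)})"
    unfolding g_def by (rule sum_card_swap) simp_all
  moreover have "(\<Sum>p\<in>Par n d. card {v\<in>FF n. good v (fst p)} + 7 * 3 ^ d * 7 ^ (n - d))
      \<ge> (\<Sum>p\<in>Par n d. 7 ^ n + 14 * 7 ^ (n - d))"
  proof (rule sum_mono)
    fix p assume p: "p \<in> Par n d"
    then have "fst p \<subseteq> {..<n}" "card (fst p) = d" by (auto simp: Par_def)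
    then show "7 ^ n + 14 * 7 ^ (n - d) \<le> card {v\<in>FF n. good v (fst p)} + 7 * 3 ^ d * 7 ^ (n - d)"
      using count_good[of "fst p" n d] d by simp
  qed
  ultimately have "(\<Sum>v\<in>FF n. g v) + card (Par n d) * (7 * 3 ^ d * 7 ^ (n - d)) \<ge> card (Par n d) * (7 ^ n + 14 * 7 ^ (n - d))"
    by (simp add: sum.distrib)
  moreover have "(\<Sum>v\<in>FF n. g v) \<le> card (FF n) * L"
    using sum_bounded_above[of "FF n" g L] gL by simp
  ultimately show ?thesis unfolding L_def card_FF by linarith
qed

lemma lower_real:
  assumes d: "d \<ge> 3" and n: "n \<ge> d"
  shows "real (Lambda n d (2 ^ (d - 3))) \<ge> (1 - (3 ^ d - 2) / 7 ^ (d - 1)) * real (card (Par n d))"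
proof -
  define L where "L = real (Lambda n d (2 ^ (d - 3)))"
  define P where "P = real (card (Par n d))"
  define q where "q = (7::real) ^ (n - d)"
  define r where "r = (7::real) ^ (d - 1)"
  have q: "q > 0" and r: "r > 0" by (simp_all add: q_def r_def)
  have "(7::real) ^ n = 7 ^ d * 7 ^ (n - d)" using n by (simp flip: power_add)
  also have "(7::real) ^ d = 7 * 7 ^ (d - 1)" using d by (simp flip: power_Suc)
  finally have e: "(7::real) ^ n = 7 * r * q" by (simp add: r_def q_def)
  have "real (7 ^ n * Lambda n d (2 ^ (d - 3)) + card (Par n d) * (7 * 3 ^ d * 7 ^ (n - d)))
         \<ge> real (card (Par n d) * (7 ^ n + 14 * 7 ^ (n - d)))"
    using lower_nat[OF d n] by linarith
  then have "7 ^ n * L + P * (7 * 3 ^ d * q) \<ge> P * (7 ^ n + 14 * q)"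
    unfolding L_def P_def q_def by simp
  then have "7 * q * (r * L + P * 3 ^ d) \<ge> 7 * q * (P * (r + 2))"
    unfolding e by (simp add: algebra_simps)
  then have "r * L + P * 3 ^ d \<ge> P * (r + 2)" using q by simp
  then have "r * L \<ge> P * (r - (3 ^ d - 2))" by (simp add: algebra_simps)
  then have "L \<ge> P * (r - (3 ^ d - 2)) / r" using r by (simp add: field_simps)
  also have "P * (r - (3 ^ d - 2)) / r = (1 - (3 ^ d - 2) / r) * P" using r by (simp add: field_simps)
  finally show ?thesis unfolding L_def P_def r_def .
qed

definition restr :: "nat \<Rightarrow> bool \<Rightarrow> (nat \<Rightarrow> bool) set \<Rightarrow> (nat \<Rightarrow> bool) set" where
  "restr n b S = (\<lambda>x. x(n := False)) ` {x\<in>S. x n = b}"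

lemma restr_sub: "S \<subseteq> hcube (Suc n) \<Longrightarrow> restr n b S \<subseteq> hcube n"
proof
  fix y assume S: "S \<subseteq> hcube (Suc n)" and "y \<in> restr n b S"
  then obtain x where x: "x \<in> S" "y = x(n := False)" unfolding restr_def by blast
  have "\<not> x i" if "Suc n \<le> i" for i using x(1) S that unfolding hcube_def by blast
  moreover have "\<not> y i" if "n \<le> i" for i
  proof (cases "i = n")
    case True then show ?thesis using x(2) by simp
  next
    case False then have "Suc n \<le> i" using that by simp
    then show ?thesis using x(2) False \<open>\<And>i. Suc n \<le> i \<Longrightarrow> \<not> x i\<close> by simp
  qed
  ultimately show "y \<in> hcube n" unfolding hcube_def by blast
qed

lemma restr_card:
  assumes S: "S \<subseteq> hcube (Suc n)" and p: "(D,a) \<in> Par (Suc n) d" and nD: "n \<notin> D"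
  shows "card (restr n (a n) S \<inter> cube n D (a(n := False))) = card (S \<inter> cube (Suc n) D a)"
proof -
  have P: "D \<subseteq> {..<Suc n}" "a \<in> hcube (Suc n)" "\<forall>i\<in>D. \<not> a i" using p by (auto simp: Par_def)
  have xn: "x n = a n" if "x \<in> cube (Suc n) D a" for x using that nD by (auto simp: cube_def)
  have img: "restr n (a n) S \<inter> cube n D (a(n := False)) = (\<lambda>x. x(n := False)) ` (S \<inter> cube (Suc n) D a)"
  proof
    show "(\<lambda>x. x(n := False)) ` (S \<inter> cube (Suc n) D a) \<subseteq> restr n (a n) S \<inter> cube n D (a(n := False))"
    proof
      fix y assume "y \<in> (\<lambda>x. x(n := False)) ` (S \<inter> cube (Suc n) D a)"
      then obtain x where x: "x \<in> S" "x \<in> cube (Suc n) D a" "y = x(n := False)" by blast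
      have "y \<in> restr n (a n) S" using x xn unfolding restr_def by blast
      moreover have "y \<in> cube n D (a(n := False))"
        using x(2,3) unfolding cube_def hcube_def by auto
      ultimately show "y \<in> restr n (a n) S \<inter> cube n D (a(n := False))" by blast
    qed
  next
    show "restr n (a n) S \<inter> cube n D (a(n := False)) \<subseteq> (\<lambda>x. x(n := False)) ` (S \<inter> cube (Suc n) D a)"
    proof
      fix y assume y: "y \<in> restr n (a n) S \<inter> cube n D (a(n := False))"
      then obtain x where x: "x \<in> S" "x n = a n" "y = x(n := False)" unfolding restr_def by blast
      have xh: "x \<in> hcube (Suc n)" using x S by blast
      have "x \<in> cube (Suc n) D a"
        unfolding cube_def
      proof (intro CollectI conjI ballI xh)
        fix i assume i: "i \<in> {..<Suc n} - D"
        show "x i = a i"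
        proof (cases "i = n")
          case True then show ?thesis using x by simp
        next
          case False
          then have "i \<in> {..<n} - D" using i by auto
          then have "y i = (a(n := False)) i" using y by (auto simp: cube_def)
          then show ?thesis using x False by simp
        qed
      qed
      then show "y \<in> (\<lambda>x. x(n := False)) ` (S \<inter> cube (Suc n) D a)" using x by blast
    qed
  qed
  have inj: "inj_on (\<lambda>x. x(n := False)) (S \<inter> cube (Suc n) D a)"
  proof (rule inj_onI)
    fix x y assume xy: "x \<in> S \<inter> cube (Suc n) D a" "y \<in> S \<inter> cube (Suc n) D a" and eq: "x(n := False) = y(n := False)"
    show "x = y"
    proof
      fix i show "x i = y i"
      proof (cases "i = n")
        case True
        have "x n = a n" "y n = a n" using xn xy by blast+
        then show ?thesis using True by simp
      next
        case False then show ?thesis using fun_cong[OF eq, of i] by simp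
      qed
    qed
  qed
  show ?thesis unfolding img by (rule card_image[OF inj])
qed

lemma last_free_bound:
  assumes S: "S \<subseteq> hcube (Suc n)"
  shows "card {p \<in> Par (Suc n) d. n \<notin> fst p \<and> card (S \<inter> cube (Suc n) (fst p) (snd p)) = s} \<le> 2 * Lambda n d s"
proof -
  let ?G = "\<lambda>b. {p \<in> Par (Suc n) d. n \<notin> fst p \<and> snd p n = b \<and> card (S \<inter> cube (Suc n) (fst p) (snd p)) = s}"
  have le: "card (?G b) \<le> Lambda n d s" for b
  proof -
    let ?rho = "\<lambda>p. (fst p, (snd p)(n := False))"
    have "card (?G b) \<le> card {p \<in> Par n d. card (restr n b S \<inter> cube n (fst p) (snd p)) = s}"
    proof (rule card_inj_on_le)
      show "inj_on ?rho (?G b)"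
      proof (rule inj_onI)
        fix p q assume pq: "p \<in> ?G b" "q \<in> ?G b" and eq: "?rho p = ?rho q"
        have 1: "fst p = fst q" using eq by simp
        have 2: "(snd p)(n := False) = (snd q)(n := False)" using eq by simp
        have "snd p = snd q"
        proof
          fix i show "snd p i = snd q i"
          proof (cases "i = n")
            case True then show ?thesis using pq by simp
          next
            case False then show ?thesis using fun_cong[OF 2, of i] by simp
          qed
        qed
        then show "p = q" using 1 by (simp add: prod_eq_iff)
      qed
    next
      show "?rho ` ?G b \<subseteq> {p \<in> Par n d. card (restr n b S \<inter> cube n (fst p) (snd p)) = s}"
      proof
        fix q assume "q \<in> ?rho ` ?G b"
        then obtain D a where Da: "(D,a) \<in> Par (Suc n) d" "n \<notin> D" "a n = b" "card (S \<inter> cube (Suc n) D a) = s" "q = (D, a(n := False))"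
          by auto
        have "(D, a(n := False)) \<in> Par n d"
          using Da(1,2) unfolding Par_def hcube_def by (auto simp: less_Suc_eq)
        moreover have "card (restr n b S \<inter> cube n D (a(n := False))) = s"
          using restr_card[OF S Da(1,2)] Da(3,4) by simp
        ultimately show "q \<in> {p \<in> Par n d. card (restr n b S \<inter> cube n (fst p) (snd p)) = s}" using Da(5) by simp
      qed
    qed simp
    also have "\<dots> = Lambda_S n (restr n b S) d s" by (simp add: LamS_eq)
    also have "\<dots> \<le> Lambda n d s" by (rule Lambda_ge[OF restr_sub[OF S]])
    finally show ?thesis .
  qed
  have "{p \<in> Par (Suc n) d. n \<notin> fst p \<and> card (S \<inter> cube (Suc n) (fst p) (snd p)) = s} = ?G True \<union> ?G False"
    by auto
  then have "card {p \<in> Par (Suc n) d. n \<notin> fst p \<and> card (S \<inter> cube (Suc n) (fst p) (snd p)) = s} \<le> card (?G True) + card (?G False)"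
    by (simp add: card_Un_le)
  then show ?thesis using le[of True] le[of False] by simp
qed

definition tr :: "nat \<Rightarrow> nat \<Rightarrow> nat \<Rightarrow> nat" where
  "tr j m i = (if i = j then m else if i = m then j else i)"

lemma tr_tr[simp]: "tr j m (tr j m i) = i"
  by (simp add: tr_def)

lemma tr_inj: "inj (tr j m)"
  by (metis injI tr_tr)

lemma tr_lt: "j < N \<Longrightarrow> m < N \<Longrightarrow> (tr j m i < N) = (i < N)"
  by (auto simp: tr_def)

lemma tr_big: "j < N \<Longrightarrow> m < N \<Longrightarrow> N \<le> i \<Longrightarrow> tr j m i = i"
  by (auto simp: tr_def)

definition phi :: "nat \<Rightarrow> nat \<Rightarrow> (nat \<Rightarrow> bool) \<Rightarrow> (nat \<Rightarrow> bool)" where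
  "phi j m x = (\<lambda>i. x (tr j m i))"

lemma phi_phi[simp]: "phi j m (phi j m x) = x"
  by (simp add: phi_def)

lemma phi_inj: "inj (phi j m)"
  by (metis injI phi_phi)

lemma phi_hcube: assumes "j < N" "m < N" shows "(phi j m x \<in> hcube N) = (x \<in> hcube N)"
  using tr_big[OF assms] unfolding hcube_def phi_def by auto

lemma phi_cube:
  assumes jm: "j < N" "m < N"
  shows "(x \<in> cube N (tr j m ` D) (phi j m a)) = (phi j m x \<in> cube N D a)"
proof
  assume x: "x \<in> cube N (tr j m ` D) (phi j m a)"
  have "phi j m x \<in> hcube N" using x phi_hcube[OF jm] by (simp add: cube_def)
  moreover have "phi j m x i = a i" if i: "i \<in> {..<N} - D" for i
  proof -
    have "tr j m i \<in> {..<N} - tr j m ` D" using i tr_lt[OF jm] inj_image_mem_iff[OF tr_inj] by auto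
    then have "x (tr j m i) = phi j m a (tr j m i)" using x by (simp add: cube_def)
    then show ?thesis by (simp add: phi_def)
  qed
  ultimately show "phi j m x \<in> cube N D a" by (simp add: cube_def)
next
  assume x: "phi j m x \<in> cube N D a"
  have "x \<in> hcube N" using x phi_hcube[OF jm] by (simp add: cube_def)
  moreover have "x i = phi j m a i" if i: "i \<in> {..<N} - tr j m ` D" for i
  proof -
    have "tr j m i \<in> {..<N} - D"
    proof -
      have "tr j m i \<notin> D"
      proof
        assume "tr j m i \<in> D"
        then have "tr j m (tr j m i) \<in> tr j m ` D" by blast
        then show False using i by simp
      qed
      then show ?thesis using i tr_lt[OF jm] by auto
    qed
    then have "phi j m x (tr j m i) = a (tr j m i)" using x by (simp add: cube_def)
    then show ?thesis by (simp add: phi_def)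
  qed
  ultimately show "x \<in> cube N (tr j m ` D) (phi j m a)" by (simp add: cube_def)
qed

lemma phi_card:
  assumes jm: "j < N" "m < N"
  shows "card (phi j m ` S \<inter> cube N (tr j m ` D) (phi j m a)) = card (S \<inter> cube N D a)"
proof -
  have "phi j m ` S \<inter> cube N (tr j m ` D) (phi j m a) = phi j m ` (S \<inter> cube N D a)"
  proof (rule set_eqI)
    fix y
    have "(y \<in> phi j m ` S) = (phi j m y \<in> S)"
      by (metis (no_types, lifting) image_iff phi_phi)
    moreover have "(y \<in> phi j m ` (S \<inter> cube N D a)) = (phi j m y \<in> S \<inter> cube N D a)"
      by (metis (no_types, lifting) image_iff phi_phi)
    ultimately show "(y \<in> phi j m ` S \<inter> cube N (tr j m ` D) (phi j m a)) = (y \<in> phi j m ` (S \<inter> cube N D a))"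
      using phi_cube[OF jm] by auto
  qed
  then show ?thesis using card_image[OF inj_on_subset[OF phi_inj subset_UNIV]] by simp
qed

lemma coord_bound:
  assumes S: "S \<subseteq> hcube (Suc n)" and j: "j < Suc n"
  shows "card {p \<in> Par (Suc n) d. j \<notin> fst p \<and> card (S \<inter> cube (Suc n) (fst p) (snd p)) = s} \<le> 2 * Lambda n d s"
proof -
  have jm: "j < Suc n" "n < Suc n" using j by auto
  let ?psi = "\<lambda>p. (tr j n ` fst p, phi j n (snd p))"
  let ?S' = "phi j n ` S"
  have S': "?S' \<subseteq> hcube (Suc n)" using S phi_hcube[OF jm] by auto
  have "card {p \<in> Par (Suc n) d. j \<notin> fst p \<and> card (S \<inter> cube (Suc n) (fst p) (snd p)) = s}
     \<le> card {p \<in> Par (Suc n) d. n \<notin> fst p \<and> card (?S' \<inter> cube (Suc n) (fst p) (snd p)) = s}"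
  proof (rule card_inj_on_le)
    show "inj_on ?psi {p \<in> Par (Suc n) d. j \<notin> fst p \<and> card (S \<inter> cube (Suc n) (fst p) (snd p)) = s}"
    proof (rule inj_onI)
      fix p q assume "?psi p = ?psi q"
      then have "tr j n ` (tr j n ` fst p) = tr j n ` (tr j n ` fst q)" "phi j n (phi j n (snd p)) = phi j n (phi j n (snd q))"
        by simp_all
      then show "p = q" by (simp add: image_image prod_eq_iff)
    qed
  next
    show "?psi ` {p \<in> Par (Suc n) d. j \<notin> fst p \<and> card (S \<inter> cube (Suc n) (fst p) (snd p)) = s}
        \<subseteq> {p \<in> Par (Suc n) d. n \<notin> fst p \<and> card (?S' \<inter> cube (Suc n) (fst p) (snd p)) = s}"
    proof
      fix q assume "q \<in> ?psi ` {p \<in> Par (Suc n) d. j \<notin> fst p \<and> card (S \<inter> cube (Suc n) (fst p) (snd p)) = s}"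
      then obtain D a where Da: "(D,a) \<in> Par (Suc n) d" "j \<notin> D" "card (S \<inter> cube (Suc n) D a) = s"
        "q = (tr j n ` D, phi j n a)" by auto
      have P: "D \<subseteq> {..<Suc n}" "card D = d" "a \<in> hcube (Suc n)" "\<forall>i\<in>D. \<not> a i" using Da(1) by (auto simp: Par_def)
      have "tr j n ` D \<subseteq> {..<Suc n}" using P(1) tr_lt[OF jm] by auto
      moreover have "card (tr j n ` D) = d" using P(2) card_image[OF inj_on_subset[OF tr_inj subset_UNIV]] by simp
      moreover have "phi j n a \<in> hcube (Suc n)" using P(3) phi_hcube[OF jm] by simp
      moreover have "\<forall>i\<in>tr j n ` D. \<not> phi j n a i" using P(4) by (auto simp: phi_def)
      ultimately have "(tr j n ` D, phi j n a) \<in> Par (Suc n) d" by (simp add: Par_def)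
      moreover have "n \<notin> tr j n ` D"
      proof
        assume "n \<in> tr j n ` D"
        then obtain k where "k \<in> D" and nk: "n = tr j n k" by blast
        have "tr j n n = tr j n (tr j n k)" using nk by (rule arg_cong)
        then have "tr j n n = k" by (simp only: tr_tr)
        then have "k = j" by (simp add: tr_def split: if_splits)
        then show False using \<open>k \<in> D\<close> Da(2) by simp
      qed
      moreover have "card (?S' \<inter> cube (Suc n) (tr j n ` D) (phi j n a)) = s"
        using phi_card[OF jm] Da(3) by simp
      ultimately show "q \<in> {p \<in> Par (Suc n) d. n \<notin> fst p \<and> card (?S' \<inter> cube (Suc n) (fst p) (snd p)) = s}"
        using Da(4) by simp
    qed
  qed simp
  also have "\<dots> \<le> 2 * Lambda n d s" by (rule last_free_bound[OF S'])
  finally show ?thesis .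
qed

lemma mono_nat:
  assumes "d \<le> n"
  shows "Lambda (Suc n) d s * (Suc n - d) \<le> 2 * Suc n * Lambda n d s"
proof -
  obtain S where S: "S \<subseteq> hcube (Suc n)" "Lambda (Suc n) d s = Lambda_S (Suc n) S d s"
    using Lambda_attained by blast
  define G where "G = {p \<in> Par (Suc n) d. card (S \<inter> cube (Suc n) (fst p) (snd p)) = s}"
  have LG: "Lambda (Suc n) d s = card G" using S(2) by (simp add: LamS_eq G_def)
  have finG: "finite G" by (simp add: G_def)
  have "(\<Sum>j\<in>{..<Suc n}. card {p\<in>G. j \<notin> fst p}) = (\<Sum>p\<in>G. card {j\<in>{..<Suc n}. j \<notin> fst p})"
    by (rule sum_card_swap) (simp_all add: finG)
  also have "\<dots> = (\<Sum>p\<in>G. Suc n - d)"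
  proof (rule sum.cong[OF refl])
    fix p assume "p \<in> G"
    then have "fst p \<subseteq> {..<Suc n}" "card (fst p) = d" by (auto simp: G_def Par_def)
    moreover have "{j\<in>{..<Suc n}. j \<notin> fst p} = {..<Suc n} - fst p" by auto
    ultimately show "card {j\<in>{..<Suc n}. j \<notin> fst p} = Suc n - d"
      by (simp add: card_Diff_subset finite_subset)
  qed
  also have "\<dots> = card G * (Suc n - d)" by simp
  finally have eq: "(\<Sum>j\<in>{..<Suc n}. card {p\<in>G. j \<notin> fst p}) = card G * (Suc n - d)" .
  have "(\<Sum>j\<in>{..<Suc n}. card {p\<in>G. j \<notin> fst p}) \<le> (\<Sum>j\<in>{..<Suc n}. 2 * Lambda n d s)"
  proof (rule sum_mono)
    fix j assume j: "j \<in> {..<Suc n}"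
    have "{p\<in>G. j \<notin> fst p} = {p \<in> Par (Suc n) d. j \<notin> fst p \<and> card (S \<inter> cube (Suc n) (fst p) (snd p)) = s}"
      by (auto simp: G_def)
    then show "card {p\<in>G. j \<notin> fst p} \<le> 2 * Lambda n d s" using coord_bound[OF S(1)] j by simp
  qed
  then show ?thesis using eq LG by (simp add: mult.commute mult.left_commute)
qed

lemma card_Par_real: "real (card (Par n d)) = real (n choose d) * 2 ^ (n - d)"
  by (simp add: card_Par)

lemma ratio_mono:
  assumes dn: "d \<le> n"
  shows "real (Lambda (Suc n) d s) / (real (Suc n choose d) * 2 ^ (Suc n - d))
       \<le> real (Lambda n d s) / (real (n choose d) * 2 ^ (n - d))"
proof -
  define L where "L = Lambda n d s"
  define L' where "L' = Lambda (Suc n) d s"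
  define C where "C = n choose d"
  define C' where "C' = Suc n choose d"
  have C: "C > 0" "C' > 0" using dn by (simp_all add: C_def C'_def)
  have m: "L' * (Suc n - d) \<le> 2 * Suc n * L" unfolding L_def L'_def by (rule mono_nat[OF dn])
  have b: "(Suc n - d) * C' = Suc n * C" unfolding C_def C'_def using binomial_absorb_comp[of "Suc n" d] by simp
  have "(L' * C) * Suc n = L' * (Suc n * C)" by (simp only: ac_simps)
  also have "\<dots> = L' * ((Suc n - d) * C')" by (simp only: b)
  also have "\<dots> = (L' * (Suc n - d)) * C'" by (simp add: mult.assoc mult.commute)
  also have "\<dots> \<le> (2 * Suc n * L) * C'" using m by (rule mult_right_mono) simp
  also have "\<dots> = (2 * L * C') * Suc n" by (simp add: mult.commute mult.left_commute)
  finally have key0: "L' * C * Suc n \<le> 2 * L * C' * Suc n" .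
  have key: "L' * C \<le> 2 * L * C'" using mult_le_cancel2[of "L' * C" "Suc n" "2 * L * C'"] key0 zero_less_Suc by blast
  have keyr: "real L' * real C \<le> 2 * real L * real C'"
    using key by (metis (mono_tags, lifting) of_nat_le_iff of_nat_mult of_nat_numeral)
  define q where "q = (2::real) ^ (n - d)"
  have q: "q > 0" by (simp add: q_def)
  have e: "(2::real) ^ (Suc n - d) = 2 * q" using dn by (simp add: q_def Suc_diff_le)
  have "real L' / (real C' * (2 * q)) \<le> real L / (real C * q)"
  proof -
    have pos1: "real C' * (2 * q) > 0" "real C * q > 0" using C q by simp_all
    have "real L' * (real C * q) \<le> real L * (real C' * (2 * q))"
      using mult_right_mono[OF keyr, of q] q by (simp add: algebra_simps)
    then show ?thesis using pos1 keyr by (simp add: divide_simps ac_simps)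
  qed
  then show ?thesis unfolding L_def L'_def C_def C'_def e q_def .
qed

theorem mainTheorem5:
  fixes d :: nat
  assumes "d \<ge> 3"
  shows "lambda_dens d (2 ^ (d - 3)) \<ge> 1 - (3 ^ d - 2) / 7 ^ (d - 1)"
proof -
  define s where "s = (2::nat) ^ (d - 3)"
  define X where "X n = real (Lambda n d s) / (real (n choose d) * 2 ^ (n - d))" for n
  define b :: real where "b = 1 - (3 ^ d - 2) / 7 ^ (d - 1)"
  have XP: "X n = real (Lambda n d s) / real (card (Par n d))" for n
    unfolding X_def card_Par_real ..
  have bnd: "b \<le> X n" if n: "n \<ge> d" for n
  proof -
    have P: "real (card (Par n d)) > 0" using n by (simp add: card_Par)
    have "b * real (card (Par n d)) \<le> real (Lambda n d s)"
      using lower_real[OF assms n] unfolding b_def s_def by simp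
    then show ?thesis unfolding XP using P by (simp add: field_simps)
  qed
  have X01: "norm (X n) \<le> 1" for n
  proof -
    have "X n \<ge> 0" unfolding X_def by simp
    moreover have "X n \<le> 1" unfolding XP
    proof (cases "card (Par n d) = 0")
      case False
      then have "card (Par n d) > 0" by (intro gr0I) blast
      then have "real (card (Par n d)) > 0" by (simp only: of_nat_0_less_iff)
      then show "real (Lambda n d s) / real (card (Par n d)) \<le> 1"
        using Lambda_le_Par[of n d s] by (simp add: divide_le_eq_1)
    qed simp
    ultimately show ?thesis by simp
  qed
  have dec: "X m \<ge> X n" if "d \<le> m" "m \<le> n" for m n
    using that(2)
  proof (induction n rule: dec_induct)
    case base then show ?case by simp
  next
    case (step k)
    have "X (Suc k) \<le> X k" unfolding X_def using ratio_mono[of d k s] step(1) that(1) by simp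
    then show ?case using step(3) by simp
  qed
  have conv: "convergent X"
    by (rule Bseq_monoseq_convergent'_dec[of X d]) (auto intro: BseqI'[of _ 1] X01 dec)
  then have lim: "X \<longlonglongrightarrow> lim X" by (simp add: convergent_LIMSEQ_iff)
  have "b \<le> lim X" by (rule LIMSEQ_le_const[OF lim]) (use bnd in blast)
  moreover have "lambda_dens d (2 ^ (d - 3)) = lim X"
    unfolding lambda_dens_def X_def s_def ..
  ultimately show ?thesis unfolding b_def by simp
qed

end
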